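(* Let $G$ be any graph of order $n$ and let $H$ be any graph with root vertex $v$. Then $$n\gamma_{oir2}(H)-\alpha(G)\leq \gamma_{oir2}(G\circ_v H)\leq n\gamma_{oir2}(H)+\beta(G).$$
   Context: All graphs are finite and simple. $\alpha(F)$ is the independence number and $\beta(F)=|V(F)|-\alpha(F)$ the vertex cover number of a graph $F$. For a graph $G$, a function $f:V(G)\to\mathcal{P}(\{1,2\})$ is an outer-independent 2-rainbow dominating function (OI2RD function) if every vertex $v$ with $f(v)=\emptyset$ satisfies $\bigcup_{u\in N(v)}f(u)=\{1,2\}$ and the set $\{v: f(v)=\emptyset\}$ is independent. The weight of $f$ is $\sum_{v}|f(v)|$ and $\gamma_{oir2}(G)$ is the minimum weight of an OI2RD function of $G$. For a graph $G$ with $V(G)=\{g_1,\dots,g_n\}$ and a graph $H$ with a distinguished vertex (root) $v$, the rooted product $G\circ_v H$ has vertex set $V(G)\times V(H)$ and edge set $\bigcup_{i=1}^n\{(g_i,h)(g_i,h') : hh'\in E(H)\}\cup\{(g_i,v)(g_j,v): g_ig_j\in E(G)\}$. *)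

theory Defs
  imports Main
begin

definition simple_graph :: "'a set \<Rightarrow> 'a set set \<Rightarrow> bool" where
  "simple_graph V E \<longleftrightarrow> finite V \<and>
     (\<forall>e\<in>E. \<exists>u w. u \<in> V \<and> w \<in> V \<and> u \<noteq> w \<and> e = {u, w})"

definition nbhd :: "'a set \<Rightarrow> 'a set set \<Rightarrow> 'a \<Rightarrow> 'a set" where
  "nbhd V E x = {u \<in> V. {u, x} \<in> E}"

definition independent :: "'a set \<Rightarrow> 'a set set \<Rightarrow> 'a set \<Rightarrow> bool" where
  "independent V E S \<longleftrightarrow> S \<subseteq> V \<and> (\<forall>u\<in>S. \<forall>w\<in>S. {u, w} \<notin> E)"

definition alpha :: "'a set \<Rightarrow> 'a set set \<Rightarrow> nat" where
  "alpha V E = Max {card S | S. independent V E S}"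

definition beta :: "'a set \<Rightarrow> 'a set set \<Rightarrow> nat" where
  "beta V E = card V - alpha V E"

text \<open>Outer-independent 2-rainbow dominating functions (only values on V matter).\<close>
definition oi2rd :: "'a set \<Rightarrow> 'a set set \<Rightarrow> ('a \<Rightarrow> nat set) \<Rightarrow> bool" where
  "oi2rd V E f \<longleftrightarrow>
     (\<forall>x\<in>V. f x \<subseteq> {1, 2}) \<and>
     (\<forall>x\<in>V. f x = {} \<longrightarrow> (\<Union>u\<in>nbhd V E x. f u) = {1, 2}) \<and>
     independent V E {x \<in> V. f x = {}}"

definition weight :: "'a set \<Rightarrow> ('a \<Rightarrow> nat set) \<Rightarrow> nat" where
  "weight V f = (\<Sum>x\<in>V. card (f x))"

definition gamma_oir2 :: "'a set \<Rightarrow> 'a set set \<Rightarrow> nat" where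
  "gamma_oir2 V E = (LEAST k. \<exists>f. oi2rd V E f \<and> weight V f = k)"

definition rp_vertices :: "'a set \<Rightarrow> 'b set \<Rightarrow> ('a \<times> 'b) set" where
  "rp_vertices VG VH = VG \<times> VH"

definition rp_edges :: "'a set \<Rightarrow> 'a set set \<Rightarrow> 'b set \<Rightarrow> 'b set set \<Rightarrow> 'b
     \<Rightarrow> ('a \<times> 'b) set set" where
  "rp_edges VG EG VH EH r =
     {{(g, h), (g, h')} | g h h'. g \<in> VG \<and> {h, h'} \<in> EH} \<union>
     {{(g, r), (g', r)} | g g'. {g, g'} \<in> EG}"

end

theory Submission
  imports Defs
begin

lemma gamma_exists:
  assumes "finite V"
  shows "\<exists>f. oi2rd V E f \<and> weight V f = gamma_oir2 V E"
proof -
  have "oi2rd V E (\<lambda>_. {1})" unfolding oi2rd_def independent_def by auto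
  hence "\<exists>k f. oi2rd V E f \<and> weight V f = k" by blast
  thus ?thesis unfolding gamma_oir2_def by (rule LeastI_ex)
qed

lemma gamma_le:
  assumes "oi2rd V E f"
  shows "gamma_oir2 V E \<le> weight V f"
  unfolding gamma_oir2_def by (rule Least_le) (use assms in blast)

lemma alpha_facts:
  assumes "finite V"
  shows "\<exists>S. independent V E S \<and> card S = alpha V E"
    and "independent V E S \<Longrightarrow> card S \<le> alpha V E"
proof -
  have fin: "finite {card S | S. independent V E S}"
  proof (rule finite_subset[of _ "{0..card V}"])
    show "{card S | S. independent V E S} \<subseteq> {0..card V}"
      using assms by (auto simp: independent_def intro: card_mono)
  qed auto
  have ne: "{card S | S. independent V E S} \<noteq> {}"
    unfolding independent_def by auto
  show "\<exists>S. independent V E S \<and> card S = alpha V E"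
    using Max_in[OF fin ne] unfolding alpha_def by auto
  show "independent V E S \<Longrightarrow> card S \<le> alpha V E"
    unfolding alpha_def by (rule Max_ge[OF fin]) blast
qed

lemma rp_edge_iff:
  "{(g,h),(g',h')} \<in> rp_edges VG EG VH EH r \<longleftrightarrow>
     (g = g' \<and> g \<in> VG \<and> {h,h'} \<in> EH) \<or> (h = r \<and> h' = r \<and> {g,g'} \<in> EG)"
  unfolding rp_edges_def
  by (auto simp: doubleton_eq_iff insert_commute)

lemma card_if_sum:
  assumes "finite A"
  shows "(\<Sum>x\<in>A. if P x then 1 else 0 :: nat) = card {x\<in>A. P x}"
  using assms by (simp add: sum.If_cases Int_def)

theorem mainTheorem6:
  fixes VG :: "'a set" and EG :: "'a set set"
    and VH :: "'b set" and EH :: "'b set set" and r :: 'b and n :: nat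
  assumes "simple_graph VG EG" and "simple_graph VH EH" and "r \<in> VH"
    and "n = card VG"
  shows "int n * int (gamma_oir2 VH EH) - int (alpha VG EG)
           \<le> int (gamma_oir2 (rp_vertices VG VH) (rp_edges VG EG VH EH r))
       \<and> int (gamma_oir2 (rp_vertices VG VH) (rp_edges VG EG VH EH r))
           \<le> int n * int (gamma_oir2 VH EH) + int (beta VG EG)"
proof -
  define V where "V = rp_vertices VG VH"
  define E where "E = rp_edges VG EG VH EH r"
  have finG: "finite VG" and finH: "finite VH"
    using assms(1,2) unfolding simple_graph_def by auto
  have noloop: "{g} \<notin> EG" for g
    using assms(1) unfolding simple_graph_def by (metis doubleton_eq_iff insert_absorb2)
  have finV: "finite V" unfolding V_def rp_vertices_def using finG finH by auto
  have wsplit: "weight V F = (\<Sum>g\<in>VG. \<Sum>h\<in>VH. card (F (g,h)))" for F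
    unfolding weight_def V_def rp_vertices_def by (simp add: sum.cartesian_product)
  have lower: "n * gamma_oir2 VH EH \<le> gamma_oir2 V E + alpha VG EG"
  proof -
    obtain F where F: "oi2rd V E F" "weight V F = gamma_oir2 V E"
      using gamma_exists[OF finV] by blast
    define T where "T = {g\<in>VG. F (g,r) = {}}"
    have Tind: "independent VG EG T"
      unfolding independent_def
    proof (intro conjI ballI)
      show "T \<subseteq> VG" unfolding T_def by auto
      fix u w assume "u \<in> T" "w \<in> T"
      hence "(u,r) \<in> {x\<in>V. F x = {}}" "(w,r) \<in> {x\<in>V. F x = {}}"
        using assms(3) unfolding T_def V_def rp_vertices_def by auto
      hence "{(u,r),(w,r)} \<notin> E" using F(1) unfolding oi2rd_def independent_def by blast
      thus "{u,w} \<notin> EG" unfolding E_def rp_edge_iff by auto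
    qed
    have Tle: "card T \<le> alpha VG EG" using alpha_facts(2)[OF finG Tind] .
    have each: "gamma_oir2 VH EH \<le> (\<Sum>h\<in>VH. card (F (g,h))) + (if F (g,r) = {} then 1 else 0)"
      if g: "g \<in> VG" for g
    proof -
      define f where "f h = (if h = r \<and> F (g,r) = {} then {1} else F (g,h))" for h
      have sub: "F (g,h) \<subseteq> {1,2}" if "h \<in> VH" for h
        using F(1) that g unfolding oi2rd_def V_def rp_vertices_def by auto
      have "oi2rd VH EH f"
        unfolding oi2rd_def
      proof (intro conjI ballI impI)
        fix h assume "h \<in> VH" thus "f h \<subseteq> {1,2}" using sub unfolding f_def by auto
      next
        fix h assume h: "h \<in> VH" and fh: "f h = {}"
        hence Fh: "F (g,h) = {}" and hr: "h \<noteq> r" unfolding f_def by (auto split: if_splits)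
        have "(g,h) \<in> V" using g h unfolding V_def rp_vertices_def by auto
        hence U: "(\<Union>u\<in>nbhd V E (g,h). F u) = {1,2}" using F(1) Fh unfolding oi2rd_def by blast
        have "(\<Union>u\<in>nbhd V E (g,h). F u) \<subseteq> (\<Union>h'\<in>nbhd VH EH h. f h')"
        proof
          fix x assume "x \<in> (\<Union>u\<in>nbhd V E (g,h). F u)"
          then obtain g' h' where u: "(g',h') \<in> nbhd V E (g,h)" "x \<in> F (g',h')" by auto
          hence "(g',h') \<in> V" "{(g',h'),(g,h)} \<in> E" unfolding nbhd_def by auto
          hence "g' = g" "{h',h} \<in> EH" "h' \<in> VH"
            using hr unfolding E_def rp_edge_iff V_def rp_vertices_def by auto
          thus "x \<in> (\<Union>h'\<in>nbhd VH EH h. f h')" using u(2) unfolding nbhd_def f_def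
            by (auto split: if_splits)
        qed
        moreover have "(\<Union>h'\<in>nbhd VH EH h. f h') \<subseteq> {1,2}"
          using sub unfolding f_def nbhd_def by auto
        ultimately show "(\<Union>h'\<in>nbhd VH EH h. f h') = {1,2}" using U by (metis subset_antisym)
      next
        show "independent VH EH {x \<in> VH. f x = {}}"
          unfolding independent_def
        proof (intro conjI ballI)
          fix u w assume "u \<in> {x \<in> VH. f x = {}}" "w \<in> {x \<in> VH. f x = {}}"
          hence "(g,u) \<in> {x\<in>V. F x = {}}" "(g,w) \<in> {x\<in>V. F x = {}}"
            using g unfolding f_def V_def rp_vertices_def by (auto split: if_splits)
          hence "{(g,u),(g,w)} \<notin> E" using F(1) unfolding oi2rd_def independent_def by blast
          thus "{u,w} \<notin> EH" using g unfolding E_def rp_edge_iff by auto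
        qed auto
      qed
      hence "gamma_oir2 VH EH \<le> weight VH f" by (rule gamma_le)
      also have "weight VH f = (\<Sum>h\<in>VH. card (F (g,h)) + (if h = r then (if F (g,r) = {} then 1 else 0) else 0))"
        unfolding weight_def f_def by (intro sum.cong) auto
      also have "\<dots> = (\<Sum>h\<in>VH. card (F (g,h))) + (if F (g,r) = {} then 1 else 0)"
        using finH assms(3) by (simp add: sum.distrib)
      finally show ?thesis .
    qed
    have "n * gamma_oir2 VH EH = (\<Sum>g\<in>VG. gamma_oir2 VH EH)" using assms(4) by simp
    also have "\<dots> \<le> (\<Sum>g\<in>VG. (\<Sum>h\<in>VH. card (F (g,h))) + (if F (g,r) = {} then 1 else 0))"
      by (rule sum_mono) (rule each)
    also have "\<dots> = weight V F + card T"
      unfolding wsplit sum.distrib T_def using card_if_sum[OF finG] by simp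
    finally show ?thesis using F(2) Tle by simp
  qed
  have upper: "gamma_oir2 V E \<le> n * gamma_oir2 VH EH + beta VG EG"
  proof -
    obtain f where f: "oi2rd VH EH f" "weight VH f = gamma_oir2 VH EH"
      using gamma_exists[OF finH] by blast
    obtain S where S: "independent VG EG S" "card S = alpha VG EG"
      using alpha_facts(1)[OF finG] by blast
    have SG: "S \<subseteq> VG" using S(1) unfolding independent_def by auto
    define F where "F x = (case x of (g,h) \<Rightarrow>
        if h = r \<and> f r = {} \<and> g \<notin> S then {1} else f h)" for x
    have sub: "f h \<subseteq> {1,2}" if "h \<in> VH" for h
      using f(1) that unfolding oi2rd_def by auto
    have "oi2rd V E F"
      unfolding oi2rd_def
    proof (intro conjI ballI impI)
      fix x assume "x \<in> V"
      then obtain g h where "x = (g,h)" "h \<in> VH" unfolding V_def rp_vertices_def by auto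
      thus "F x \<subseteq> {1,2}" using sub[of h] unfolding F_def by auto
    next
      fix x assume x: "x \<in> V" and Fx: "F x = {}"
      obtain g h where xe: "x = (g,h)" by (cases x)
      have g: "g \<in> VG" and h: "h \<in> VH" using x xe unfolding V_def rp_vertices_def by auto
      have fh: "f h = {}" using Fx xe unfolding F_def by (auto split: if_splits)
      hence U: "(\<Union>h'\<in>nbhd VH EH h. f h') = {1,2}" using f(1) h unfolding oi2rd_def by blast
      have "(\<Union>h'\<in>nbhd VH EH h. f h') \<subseteq> (\<Union>u\<in>nbhd V E x. F u)"
      proof
        fix y assume "y \<in> (\<Union>h'\<in>nbhd VH EH h. f h')"
        then obtain h' where h': "h' \<in> VH" "{h',h} \<in> EH" "y \<in> f h'" unfolding nbhd_def by auto
        have "(g,h') \<in> nbhd V E x" using g h' xe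
          by (simp add: nbhd_def V_def rp_vertices_def E_def rp_edge_iff)
        moreover have "y \<in> F (g,h')" using h'(3) unfolding F_def by auto
        ultimately show "y \<in> (\<Union>u\<in>nbhd V E x. F u)" by blast
      qed
      moreover have "(\<Union>u\<in>nbhd V E x. F u) \<subseteq> {1,2}"
      proof
        fix y assume "y \<in> (\<Union>u\<in>nbhd V E x. F u)"
        then obtain g' h' where "(g',h') \<in> V" "y \<in> F (g',h')" unfolding nbhd_def by auto
        thus "y \<in> {1,2}" using sub[of h'] unfolding F_def V_def rp_vertices_def
          by (auto split: if_splits)
      qed
      ultimately show "(\<Union>u\<in>nbhd V E x. F u) = {1,2}" using U by (metis subset_antisym)
    next
      show "independent V E {x \<in> V. F x = {}}"
        unfolding independent_def
      proof (intro conjI ballI)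
        fix u w assume u: "u \<in> {x \<in> V. F x = {}}" and w: "w \<in> {x \<in> V. F x = {}}"
        obtain g h where ue: "u = (g,h)" by (cases u)
        obtain g' h' where we: "w = (g',h')" by (cases w)
        have A: "h \<in> VH" "f h = {}" "h = r \<and> f r = {} \<longrightarrow> g \<in> S"
          using u ue unfolding F_def V_def rp_vertices_def by (auto split: if_splits)
        have B: "h' \<in> VH" "f h' = {}" "h' = r \<and> f r = {} \<longrightarrow> g' \<in> S"
          using w we unfolding F_def V_def rp_vertices_def by (auto split: if_splits)
        have Hi: "{h,h'} \<notin> EH" using f(1) A B unfolding oi2rd_def independent_def by blast
        show "{u,w} \<notin> E"
        proof
          assume "{u,w} \<in> E"
          hence "h = r \<and> h' = r \<and> {g,g'} \<in> EG" using Hi unfolding ue we E_def rp_edge_iff by auto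
          thus False using A B S(1) unfolding independent_def by blast
        qed
      qed auto
    qed
    hence "gamma_oir2 V E \<le> weight V F" by (rule gamma_le)
    also have "weight V F = (\<Sum>g\<in>VG. \<Sum>h\<in>VH. card (f h) +
         (if h = r then (if f r = {} \<and> g \<notin> S then 1 else 0) else 0))"
      unfolding wsplit F_def by (intro sum.cong) auto
    also have "\<dots> = (\<Sum>g\<in>VG. weight VH f + (if f r = {} \<and> g \<notin> S then 1 else 0))"
      using finH assms(3) by (simp add: sum.distrib weight_def)
    also have "\<dots> \<le> (\<Sum>g\<in>VG. weight VH f + (if g \<notin> S then 1 else 0))"
      by (intro sum_mono) auto
    also have "\<dots> = n * weight VH f + card {g\<in>VG. g \<notin> S}"
      using card_if_sum[OF finG] assms(4) by (simp add: sum.distrib)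
    also have "card {g\<in>VG. g \<notin> S} = beta VG EG"
    proof -
      have "{g\<in>VG. g \<notin> S} = VG - S" by auto
      thus ?thesis unfolding beta_def using S(2) SG finG by (simp add: card_Diff_subset finite_subset)
    qed
    finally show ?thesis using f(2) by simp
  qed
  have l: "int (n * gamma_oir2 VH EH) \<le> int (gamma_oir2 V E + alpha VG EG)"
    using lower by (rule of_nat_mono)
  have u: "int (gamma_oir2 V E) \<le> int (n * gamma_oir2 VH EH + beta VG EG)"
    using upper by (rule of_nat_mono)
  show ?thesis using l u unfolding V_def E_def of_nat_mult of_nat_add by linarith
qed

end
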